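(* In the setting described in the context (with $L=[0,1]$), let $q\in\{1,\dots,n\}$ and assume there exists $A\subseteq\mathcal C$ with $|A|=q$ and $\eta_q(A)=1$. Define $\mu^*:2^{\mathcal C}\to[0,1]$ by $\mu^*(\emptyset)=0$, $\mu^*(X)=\eta_q(X)$ if $0<|X|\le q$, and $\mu^*(X)=\max_{\emptyset\neq Y\subsetneq X,\ |Y|\le q}\eta_q(Y)$ if $|X|>q$. Then $\mu^*$ is the greatest (pointwise) among all $q$-maxitive capacities $\mu:2^{\mathcal C}\to[0,1]$ satisfying $\max_{1\le k\le N}|S_\mu(x^{(k)})-\alpha^{(k)}|=\Delta_q$.
   Context: Let $\mathcal C=\{1,\dots,n\}$ and $L=[0,1]$. A capacity is a map $\mu:2^{\mathcal C}\to[0,1]$ with $\mu(\emptyset)=0$, $\mu(\mathcal C)=1$, monotone for inclusion; it is $q$-maxitive if for all $X$ with $|X|>q$, $\mu(X)=\max_{Y\subsetneq X,\ |Y|\le q}\mu(Y)$. Sugeno integral: $S_\mu(x)=\max_{A\subseteq\mathcal C}\min(\min_{i\in A}x_i,\mu(A))$ with $\min_{i\in\emptyset}x_i=1$. Training data: $N$ pairs $(x^{(k)},\alpha^{(k)})$, $x^{(k)}\in[0,1]^n$, $\alpha^{(k)}\in[0,1]$. For nonempty $A$, $m_{k,A}=\min_{i\in A}x^{(k)}_i$. Write $t^+=\max(t,0)$. For $1\le i\le N$ and $0<|A|\le q$, let $\sigma_G(\alpha^{(i)},m_{l,A},\alpha^{(l)})=\min\big(\tfrac{(\alpha^{(i)}-\alpha^{(l)})^+}{2},(m_{l,A}-\alpha^{(l)})^+\big)$,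 $\delta_{i,A}=\max\big((\alpha^{(i)}-m_{i,A})^+,\max_{1\le l\le N}\sigma_G(\alpha^{(i)},m_{l,A},\alpha^{(l)})\big)$, $\delta_i=\min_{0<|A|\le q}\delta_{i,A}$, and $\Delta_q=\max_{1\le i\le N}\delta_i$. For $0<|A|\le q$, $\eta_q(A)=\min_{1\le k\le N}\big(m_{k,A}\to_G\min(\alpha^{(k)}+\Delta_q,1)\big)$, where $a\to_G b=1$ if $a\le b$ and $a\to_G b=b$ otherwise. *)

theory Defs
  imports Complex_Main
begin

text \<open>Criteria are C = {1..n}; training data: x k i (k in {1..N}, i in {1..n}) and alpha k.
  Capacities are functions on nat set, only their values on subsets of {1..n} matter.\<close>

definition pos :: "real \<Rightarrow> real" where
  "pos t = max t 0"

definition is_capacity :: "nat \<Rightarrow> (nat set \<Rightarrow> real) \<Rightarrow> bool" where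
  "is_capacity n \<mu> \<longleftrightarrow>
     (\<forall>X. X \<subseteq> {1..n} \<longrightarrow> 0 \<le> \<mu> X \<and> \<mu> X \<le> 1) \<and>
     \<mu> {} = 0 \<and> \<mu> {1..n} = 1 \<and>
     (\<forall>X Y. X \<subseteq> Y \<and> Y \<subseteq> {1..n} \<longrightarrow> \<mu> X \<le> \<mu> Y)"

definition q_maxitive :: "nat \<Rightarrow> nat \<Rightarrow> (nat set \<Rightarrow> real) \<Rightarrow> bool" where
  "q_maxitive n q \<mu> \<longleftrightarrow>
     (\<forall>X. X \<subseteq> {1..n} \<and> card X > q \<longrightarrow>
        \<mu> X = Max {\<mu> Y | Y. Y \<subset> X \<and> card Y \<le> q})"

definition minx :: "(nat \<Rightarrow> real) \<Rightarrow> nat set \<Rightarrow> real" where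
  "minx xv A = (if A = {} then 1 else Min (xv ` A))"

definition sugeno :: "nat \<Rightarrow> (nat set \<Rightarrow> real) \<Rightarrow> (nat \<Rightarrow> real) \<Rightarrow> real" where
  "sugeno n \<mu> xv = Max ((\<lambda>A. min (minx xv A) (\<mu> A)) ` Pow {1..n})"

definition mkA :: "(nat \<Rightarrow> nat \<Rightarrow> real) \<Rightarrow> nat \<Rightarrow> nat set \<Rightarrow> real" where
  "mkA x k A = Min ((\<lambda>i. x k i) ` A)"

definition sigmaG :: "real \<Rightarrow> real \<Rightarrow> real \<Rightarrow> real" where
  "sigmaG ai m al = min (pos (ai - al) / 2) (pos (m - al))"

definition delta_iA :: "nat \<Rightarrow> (nat \<Rightarrow> nat \<Rightarrow> real) \<Rightarrow> (nat \<Rightarrow> real) \<Rightarrow> nat \<Rightarrow> nat set \<Rightarrow> real" where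
  "delta_iA N x \<alpha> i A = max (pos (\<alpha> i - mkA x i A))
      (Max ((\<lambda>l. sigmaG (\<alpha> i) (mkA x l A) (\<alpha> l)) ` {1..N}))"

definition delta_i :: "nat \<Rightarrow> nat \<Rightarrow> nat \<Rightarrow> (nat \<Rightarrow> nat \<Rightarrow> real) \<Rightarrow> (nat \<Rightarrow> real) \<Rightarrow> nat \<Rightarrow> real" where
  "delta_i n N q x \<alpha> i = Min ((\<lambda>A. delta_iA N x \<alpha> i A) ` {A. A \<subseteq> {1..n} \<and> 0 < card A \<and> card A \<le> q})"

definition Delta_q :: "nat \<Rightarrow> nat \<Rightarrow> nat \<Rightarrow> (nat \<Rightarrow> nat \<Rightarrow> real) \<Rightarrow> (nat \<Rightarrow> real) \<Rightarrow> real" where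
  "Delta_q n N q x \<alpha> = Max ((\<lambda>i. delta_i n N q x \<alpha> i) ` {1..N})"

definition impG :: "real \<Rightarrow> real \<Rightarrow> real" where
  "impG a b = (if a \<le> b then 1 else b)"

definition eta_q :: "nat \<Rightarrow> nat \<Rightarrow> nat \<Rightarrow> (nat \<Rightarrow> nat \<Rightarrow> real) \<Rightarrow> (nat \<Rightarrow> real) \<Rightarrow> nat set \<Rightarrow> real" where
  "eta_q n N q x \<alpha> A = Min ((\<lambda>k. impG (mkA x k A) (min (\<alpha> k + Delta_q n N q x \<alpha>) 1)) ` {1..N})"

definition mu_star :: "nat \<Rightarrow> nat \<Rightarrow> nat \<Rightarrow> (nat \<Rightarrow> nat \<Rightarrow> real) \<Rightarrow> (nat \<Rightarrow> real) \<Rightarrow> nat set \<Rightarrow> real" where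
  "mu_star n N q x \<alpha> X =
     (if X = {} then 0
      else if card X \<le> q then eta_q n N q x \<alpha> X
      else Max {eta_q n N q x \<alpha> Y | Y. Y \<noteq> {} \<and> Y \<subset> X \<and> card Y \<le> q})"

definition fit_error :: "nat \<Rightarrow> nat \<Rightarrow> (nat \<Rightarrow> nat \<Rightarrow> real) \<Rightarrow> (nat \<Rightarrow> real) \<Rightarrow> (nat set \<Rightarrow> real) \<Rightarrow> real" where
  "fit_error n N x \<alpha> \<mu> = Max ((\<lambda>k. \<bar>sugeno n \<mu> (x k) - \<alpha> k\<bar>) ` {1..N})"

definition admissible :: "nat \<Rightarrow> nat \<Rightarrow> nat \<Rightarrow> (nat \<Rightarrow> nat \<Rightarrow> real) \<Rightarrow> (nat \<Rightarrow> real) \<Rightarrow> (nat set \<Rightarrow> real) \<Rightarrow> bool" where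
  "admissible n N q x \<alpha> \<mu> \<longleftrightarrow>
     is_capacity n \<mu> \<and> q_maxitive n q \<mu> \<and> fit_error n N x \<alpha> \<mu> = Delta_q n N q x \<alpha>"

end

theory Submission
  imports Defs
begin

lemma sugeno_ge:
  assumes "A \<subseteq> {1..n}"
  shows "min (minx xv A) (\<mu> A) \<le> sugeno n \<mu> xv"
  unfolding sugeno_def using assms by (intro Max_ge) auto

lemma sugeno_ex:
  "\<exists>B. B \<subseteq> {1..n} \<and> sugeno n \<mu> xv = min (minx xv B) (\<mu> B)"
proof -
  have "sugeno n \<mu> xv \<in> (\<lambda>A. min (minx xv A) (\<mu> A)) ` Pow {1..n}"
    unfolding sugeno_def by (intro Max_in) auto
  then show ?thesis by auto
qed

lemma sugeno_le:
  assumes "\<forall>A. A \<subseteq> {1..n} \<longrightarrow> min (minx xv A) (\<mu> A) \<le> c"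
  shows "sugeno n \<mu> xv \<le> c"
  unfolding sugeno_def using assms by (subst Max_le_iff) auto

lemma minx_anti:
  assumes "A \<subseteq> B" "A \<noteq> {}" "finite B"
  shows "minx xv B \<le> minx xv A"
  using assms unfolding minx_def by (auto intro!: Min_antimono)

lemma fit_ge:
  assumes "k \<in> {1..N}"
  shows "\<bar>sugeno n \<mu> (x k) - \<alpha> k\<bar> \<le> fit_error n N x \<alpha> \<mu>"
  unfolding fit_error_def using assms by (intro Max_ge) auto

lemma fit_le:
  assumes "1 \<le> N" "\<forall>k\<in>{1..N}. \<bar>sugeno n \<mu> (x k) - \<alpha> k\<bar> \<le> c"
  shows "fit_error n N x \<alpha> \<mu> \<le> c"
  unfolding fit_error_def using assms by (subst Max_le_iff) auto

lemma reduce: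
  assumes cap: "is_capacity n \<mu>" and qm: "q_maxitive n q \<mu>" and t: "0 < t"
    and le: "t \<le> sugeno n \<mu> xv"
  shows "\<exists>A. A \<subseteq> {1..n} \<and> A \<noteq> {} \<and> card A \<le> q \<and> t \<le> minx xv A \<and> t \<le> \<mu> A"
proof -
  obtain B where B: "B \<subseteq> {1..n}" "sugeno n \<mu> xv = min (minx xv B) (\<mu> B)"
    using sugeno_ex by blast
  have mB: "t \<le> minx xv B" "t \<le> \<mu> B" using B le by auto
  have e: "\<mu> {} = 0" using cap unfolding is_capacity_def by auto
  have Bne: "B \<noteq> {}" using mB t e by auto
  have fB: "finite B" using B(1) finite_subset by blast
  show ?thesis
  proof (cases "card B \<le> q")
    case True then show ?thesis using B mB Bne by blast
  next
    case False
    then have eq: "\<mu> B = Max {\<mu> Y | Y. Y \<subset> B \<and> card Y \<le> q}"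
      using qm B(1) unfolding q_maxitive_def by auto
    have fin: "finite {\<mu> Y | Y. Y \<subset> B \<and> card Y \<le> q}"
    proof (rule finite_subset[of _ "\<mu> ` Pow B"])
      show "{\<mu> Y | Y. Y \<subset> B \<and> card Y \<le> q} \<subseteq> \<mu> ` Pow B" by auto
    qed (use fB in auto)
    have ne: "{\<mu> Y | Y. Y \<subset> B \<and> card Y \<le> q} \<noteq> {}"
      using Bne by auto
    have "\<mu> B \<in> {\<mu> Y | Y. Y \<subset> B \<and> card Y \<le> q}"
      unfolding eq using fin ne by (rule Max_in)
    then obtain Y where Y: "Y \<subset> B" "card Y \<le> q" "\<mu> B = \<mu> Y" by auto
    have Yne: "Y \<noteq> {}" using Y mB t e by auto
    have "minx xv B \<le> minx xv Y" using minx_anti[OF _ Yne fB] Y(1) by auto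
    then show ?thesis using Y Yne mB B(1) by (intro exI[of _ Y]) auto
  qed
qed

context
  fixes n N q :: nat and x :: "nat \<Rightarrow> nat \<Rightarrow> real" and \<alpha> :: "nat \<Rightarrow> real"
  assumes n1: "1 \<le> n" and N1: "1 \<le> N"
    and xr: "\<forall>k\<in>{1..N}. \<forall>i\<in>{1..n}. 0 \<le> x k i \<and> x k i \<le> 1"
    and ar: "\<forall>k\<in>{1..N}. 0 \<le> \<alpha> k \<and> \<alpha> k \<le> 1"
    and q1: "1 \<le> q" and qn: "q \<le> n"
begin

lemma mkA_range:
  assumes "k \<in> {1..N}" "A \<subseteq> {1..n}" "A \<noteq> {}"
  shows "0 \<le> mkA x k A \<and> mkA x k A \<le> 1"
proof -
  have "finite A" using assms(2) finite_subset by blast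
  then have "mkA x k A \<in> (\<lambda>i. x k i) ` A" unfolding mkA_def using assms(3) by (intro Min_in) auto
  then show ?thesis using assms xr by auto
qed

lemma mkA_anti:
  assumes "A \<subseteq> B" "A \<noteq> {}" "B \<subseteq> {1..n}"
  shows "mkA x k B \<le> mkA x k A"
proof -
  have "finite B" using assms(3) finite_subset by blast
  then show ?thesis using assms unfolding mkA_def by (auto intro!: Min_antimono)
qed

lemma minx_mkA: "A \<noteq> {} \<Longrightarrow> minx (x k) A = mkA x k A"
  unfolding minx_def mkA_def by simp

definition Aset where "Aset = {A. A \<subseteq> {1..n} \<and> 0 < card A \<and> card A \<le> q}"

lemma Aset_fin: "finite Aset"
  unfolding Aset_def by (rule finite_subset[of _ "Pow {1..n}"]) auto

lemma Aset_ne: "{1} \<in> Aset"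
  unfolding Aset_def using n1 q1 by auto

lemma delta_i_le: "A \<in> Aset \<Longrightarrow> delta_i n N q x \<alpha> i \<le> delta_iA N x \<alpha> i A"
  unfolding delta_i_def using Aset_fin unfolding Aset_def by (intro Min_le) auto

lemma delta_i_ex: "\<exists>A\<in>Aset. delta_i n N q x \<alpha> i = delta_iA N x \<alpha> i A"
proof -
  have "delta_i n N q x \<alpha> i \<in> (\<lambda>A. delta_iA N x \<alpha> i A) ` Aset"
    unfolding delta_i_def using Aset_fin Aset_ne unfolding Aset_def by (intro Min_in) blast+
  then show ?thesis by auto
qed

lemma Delta_ge: "i \<in> {1..N} \<Longrightarrow> delta_i n N q x \<alpha> i \<le> Delta_q n N q x \<alpha>"
  unfolding Delta_q_def by (intro Max_ge) auto

lemma Delta_ex: "\<exists>i\<in>{1..N}. Delta_q n N q x \<alpha> = delta_i n N q x \<alpha> i"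
proof -
  have "Delta_q n N q x \<alpha> \<in> (\<lambda>i. delta_i n N q x \<alpha> i) ` {1..N}"
    unfolding Delta_q_def using N1 by (intro Max_in) auto
  then show ?thesis by auto
qed

lemma delta_iA_le_iff:
  "delta_iA N x \<alpha> i A \<le> e \<longleftrightarrow> pos (\<alpha> i - mkA x i A) \<le> e \<and>
     (\<forall>l\<in>{1..N}. sigmaG (\<alpha> i) (mkA x l A) (\<alpha> l) \<le> e)"
  unfolding delta_iA_def using N1 by (simp add: Max_le_iff)

lemma delta_iA_ge: "pos (\<alpha> i - mkA x i A) \<le> delta_iA N x \<alpha> i A"
  unfolding delta_iA_def by simp

lemma Delta_nonneg: "0 \<le> Delta_q n N q x \<alpha>"
proof -
  obtain A where "A \<in> Aset" "delta_i n N q x \<alpha> 1 = delta_iA N x \<alpha> 1 A" using delta_i_ex by blast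
  moreover have "0 \<le> pos (\<alpha> 1 - mkA x 1 A)" unfolding pos_def by simp
  ultimately have "0 \<le> delta_i n N q x \<alpha> 1" using delta_iA_ge[of 1 A] by linarith
  then show ?thesis using Delta_ge[of 1] N1 by force
qed

lemma eta_le: "k \<in> {1..N} \<Longrightarrow>
   eta_q n N q x \<alpha> A \<le> impG (mkA x k A) (min (\<alpha> k + Delta_q n N q x \<alpha>) 1)"
  unfolding eta_q_def by (intro Min_le) auto

lemma eta_ge_iff: "c \<le> eta_q n N q x \<alpha> A \<longleftrightarrow>
   (\<forall>k\<in>{1..N}. c \<le> impG (mkA x k A) (min (\<alpha> k + Delta_q n N q x \<alpha>) 1))"
  unfolding eta_q_def using N1 by (subst Min_ge_iff) auto

lemma eta_range: "0 \<le> eta_q n N q x \<alpha> A \<and> eta_q n N q x \<alpha> A \<le> 1"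
proof -
  have "0 \<le> eta_q n N q x \<alpha> A"
    unfolding eta_ge_iff using ar Delta_nonneg by (auto simp: impG_def)
  moreover have "eta_q n N q x \<alpha> A \<le> 1"
    using eta_le[of 1 A] N1 by (auto simp: impG_def split: if_splits)
  ultimately show ?thesis by simp
qed

lemma eta_mono:
  assumes "A \<subseteq> B" "A \<noteq> {}" "B \<subseteq> {1..n}"
  shows "eta_q n N q x \<alpha> A \<le> eta_q n N q x \<alpha> B"
  unfolding eta_ge_iff
proof
  fix k assume k: "k \<in> {1..N}"
  have m: "mkA x k B \<le> mkA x k A" using mkA_anti assms by blast
  have "eta_q n N q x \<alpha> A \<le> impG (mkA x k A) (min (\<alpha> k + Delta_q n N q x \<alpha>) 1)"
    using eta_le k by blast
  also have "\<dots> \<le> impG (mkA x k B) (min (\<alpha> k + Delta_q n N q x \<alpha>) 1)"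
    using m by (auto simp: impG_def)
  finally show "eta_q n N q x \<alpha> A \<le> impG (mkA x k B) (min (\<alpha> k + Delta_q n N q x \<alpha>) 1)" .
qed

lemma ms_big:
  assumes X: "X \<subseteq> {1..n}" "q < card X"
  shows "(\<exists>Y. Y \<noteq> {} \<and> Y \<subset> X \<and> card Y \<le> q \<and> mu_star n N q x \<alpha> X = eta_q n N q x \<alpha> Y) \<and>
    (\<forall>Y. Y \<noteq> {} \<and> Y \<subset> X \<and> card Y \<le> q \<longrightarrow> eta_q n N q x \<alpha> Y \<le> mu_star n N q x \<alpha> X)"
proof -
  let ?S = "{eta_q n N q x \<alpha> Y | Y. Y \<noteq> {} \<and> Y \<subset> X \<and> card Y \<le> q}"
  have fX: "finite X" using X finite_subset by blast
  have Xne: "X \<noteq> {}" using X by auto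
  have eq: "mu_star n N q x \<alpha> X = Max ?S" unfolding mu_star_def using Xne X by auto
  have fin: "finite ?S"
    by (rule finite_subset[of _ "eta_q n N q x \<alpha> ` Pow X"]) (use fX in auto)
  obtain a where a: "a \<in> X" using Xne by blast
  have "X \<noteq> {a}" using X q1 by auto
  then have "{a} \<subset> X" using a by auto
  then have ne: "?S \<noteq> {}" using q1 by auto
  have "Max ?S \<in> ?S" using fin ne by (rule Max_in)
  moreover have "\<forall>Y. Y \<noteq> {} \<and> Y \<subset> X \<and> card Y \<le> q \<longrightarrow> eta_q n N q x \<alpha> Y \<le> Max ?S"
    using fin by (intro allI impI Max_ge) blast+
  ultimately show ?thesis unfolding eq by blast
qed

lemma ms_range: "0 \<le> mu_star n N q x \<alpha> X \<and> mu_star n N q x \<alpha> X \<le> 1"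
  if XX: "X \<subseteq> {1..n}" for X
proof (cases "X = {} \<or> card X \<le> q")
  case True then show ?thesis using eta_range by (auto simp: mu_star_def)
next
  case False
  then obtain Y where "mu_star n N q x \<alpha> X = eta_q n N q x \<alpha> Y"
    using ms_big[OF XX] by auto
  then show ?thesis using eta_range by simp
qed

lemma ms_small: "X \<noteq> {} \<Longrightarrow> card X \<le> q \<Longrightarrow> mu_star n N q x \<alpha> X = eta_q n N q x \<alpha> X"
  unfolding mu_star_def by simp

lemma ms_mono:
  assumes "X \<subseteq> Y" "Y \<subseteq> {1..n}"
  shows "mu_star n N q x \<alpha> X \<le> mu_star n N q x \<alpha> Y"
proof -
  have fY: "finite Y" using assms finite_subset by blast
  show ?thesis
  proof (cases "X = {}")
    case True then show ?thesis using ms_range[OF assms(2)] by (simp add: mu_star_def)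
  next
    case Xne: False
    show ?thesis
    proof (cases "card X \<le> q")
      case cX: True
      show ?thesis
      proof (cases "card Y \<le> q")
        case True
        then have "Y \<noteq> {}" using Xne assms by auto
        then show ?thesis using ms_small True cX Xne eta_mono assms by simp
      next
        case False
        then have "X \<subset> Y" using cX assms by auto
        then show ?thesis using ms_big[OF assms(2)] False cX Xne ms_small by auto
      qed
    next
      case cX: False
      then have cY: "q < card Y" using card_mono[OF fY assms(1)] by simp
      obtain Z where "Z \<noteq> {}" "Z \<subset> X" "card Z \<le> q" "mu_star n N q x \<alpha> X = eta_q n N q x \<alpha> Z"
        using ms_big[of X] assms cX by auto
      moreover have "Z \<subset> Y" using calculation assms by auto
      ultimately show ?thesis using ms_big[OF assms(2) cY] by auto
    qed
  qed
qed

lemma ms_cap: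
  assumes "\<exists>A. A \<subseteq> {1..n} \<and> card A = q \<and> eta_q n N q x \<alpha> A = 1"
  shows "is_capacity n (mu_star n N q x \<alpha>)"
proof -
  obtain A where A: "A \<subseteq> {1..n}" "card A = q" "eta_q n N q x \<alpha> A = 1" using assms by blast
  have Ane: "A \<noteq> {}" using A q1 by auto
  have "mu_star n N q x \<alpha> {1..n} = 1"
  proof (cases "n = q")
    case True
    then have "A = {1..n}" using A by (intro card_subset_eq) auto
    have "mu_star n N q x \<alpha> A = eta_q n N q x \<alpha> A" using ms_small[OF Ane] A(2) by simp
    then show ?thesis using A(3) \<open>A = {1..n}\<close> by simp
  next
    case False
    then have "q < card {1..n}" using qn by simp
    moreover have "A \<subset> {1..n}" using A calculation by auto
    ultimately have "eta_q n N q x \<alpha> A \<le> mu_star n N q x \<alpha> {1..n}"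
      using conjunct2[OF ms_big[of "{1..n}"]] A(2) Ane by blast
    then have "1 \<le> mu_star n N q x \<alpha> {1..n}" using A(3) by simp
    then show ?thesis using ms_range[of "{1..n}"] by auto
  qed
  moreover have "mu_star n N q x \<alpha> {} = 0" by (simp add: mu_star_def)
  ultimately show ?thesis unfolding is_capacity_def
  proof (intro conjI allI impI)
    fix X assume "X \<subseteq> {1..n}"
    then show "0 \<le> mu_star n N q x \<alpha> X" "mu_star n N q x \<alpha> X \<le> 1" using ms_range by auto
  next
    fix X Y assume "X \<subseteq> Y \<and> Y \<subseteq> {1..n}"
    then show "mu_star n N q x \<alpha> X \<le> mu_star n N q x \<alpha> Y" using ms_mono by blast
  qed
qed

lemma ms_qmax: "q_maxitive n q (mu_star n N q x \<alpha>)"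
  unfolding q_maxitive_def
proof (intro allI impI)
  fix X assume X: "X \<subseteq> {1..n} \<and> q < card X"
  have X1: "X \<subseteq> {1..n}" and X2: "q < card X" using X by auto
  note MB1 = conjunct1[OF ms_big[OF X1 X2]]
  note MB2 = conjunct2[OF ms_big[OF X1 X2], rule_format]
  let ?S = "{mu_star n N q x \<alpha> Y | Y. Y \<subset> X \<and> card Y \<le> q}"
  have fX: "finite X" using X1 finite_subset by blast
  have fin: "finite ?S"
    by (rule finite_subset[of _ "mu_star n N q x \<alpha> ` Pow X"]) (use fX in auto)
  obtain Z where Z: "Z \<noteq> {}" "Z \<subset> X" "card Z \<le> q" "mu_star n N q x \<alpha> X = eta_q n N q x \<alpha> Z"
    using MB1 by blast
  have "mu_star n N q x \<alpha> Z = eta_q n N q x \<alpha> Z" using ms_small[OF Z(1,3)] .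
  then have "mu_star n N q x \<alpha> X = mu_star n N q x \<alpha> Z" using Z(4) by simp
  then have inS: "mu_star n N q x \<alpha> X \<in> ?S" using Z(2,3) by blast
  have ub: "y \<le> mu_star n N q x \<alpha> X" if "y \<in> ?S" for y
  proof -
    obtain Y where Y: "Y \<subset> X" "card Y \<le> q" "y = mu_star n N q x \<alpha> Y" using \<open>y \<in> ?S\<close> by blast
    show "y \<le> mu_star n N q x \<alpha> X"
    proof (cases "Y = {}")
      case True
      have "mu_star n N q x \<alpha> {} = 0" by (simp add: mu_star_def)
      then show ?thesis using True Y(3) ms_range[OF X1] by simp
    next
      case False
      then have "mu_star n N q x \<alpha> Y = eta_q n N q x \<alpha> Y" using ms_small Y(2) by blast
      moreover have "eta_q n N q x \<alpha> Y \<le> mu_star n N q x \<alpha> X" using MB2 Y(1,2) False by blast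
      ultimately show ?thesis using Y(3) by simp
    qed
  qed
  show "mu_star n N q x \<alpha> X = Max ?S"
    by (rule Max_eqI[OF fin, symmetric]) (use ub inS in auto)
qed

lemma lower:
  assumes cap: "is_capacity n \<mu>" and qm: "q_maxitive n q \<mu>" and i: "i \<in> {1..N}"
  shows "delta_i n N q x \<alpha> i \<le> fit_error n N x \<alpha> \<mu>"
proof -
  let ?e = "fit_error n N x \<alpha> \<mu>"
  have fe: "\<And>l. l \<in> {1..N} \<Longrightarrow> \<bar>sugeno n \<mu> (x l) - \<alpha> l\<bar> \<le> ?e" using fit_ge by blast
  have e0: "0 \<le> ?e" using fe[OF i] by linarith
  have ai: "0 \<le> \<alpha> i" "\<alpha> i \<le> 1" using ar i by auto
  show ?thesis
  proof (cases "\<alpha> i - ?e \<le> 0")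
    case True
    have "delta_iA N x \<alpha> i {1} \<le> ?e"
      unfolding delta_iA_le_iff
    proof
      have "0 \<le> mkA x i {1}" using mkA_range[OF i] n1 by auto
      then show "pos (\<alpha> i - mkA x i {1}) \<le> ?e" using True e0 by (simp add: pos_def)
      show "\<forall>l\<in>{1..N}. sigmaG (\<alpha> i) (mkA x l {1}) (\<alpha> l) \<le> ?e"
      proof
        fix l assume l: "l \<in> {1..N}"
        have "0 \<le> \<alpha> l" using ar l by blast
        then have "pos (\<alpha> i - \<alpha> l) / 2 \<le> ?e" using True e0 by (simp add: pos_def)
        then show "sigmaG (\<alpha> i) (mkA x l {1}) (\<alpha> l) \<le> ?e" unfolding sigmaG_def by simp
      qed
    qed
    then show ?thesis using delta_i_le[OF Aset_ne, of i] by linarith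
  next
    case False
    have "\<alpha> i - ?e \<le> sugeno n \<mu> (x i)" using fe[OF i] by linarith
    then obtain A where A: "A \<subseteq> {1..n}" "A \<noteq> {}" "card A \<le> q"
      "\<alpha> i - ?e \<le> minx (x i) A" "\<alpha> i - ?e \<le> \<mu> A"
      using reduce[OF cap qm, of "\<alpha> i - ?e"] False by auto
    have fA: "finite A" using A finite_subset by blast
    have AA: "A \<in> Aset" unfolding Aset_def using A fA by (auto simp: card_gt_0_iff)
    have "delta_iA N x \<alpha> i A \<le> ?e"
      unfolding delta_iA_le_iff
    proof
      show "pos (\<alpha> i - mkA x i A) \<le> ?e" using A(4) minx_mkA[OF A(2)] e0 by (simp add: pos_def)
      show "\<forall>l\<in>{1..N}. sigmaG (\<alpha> i) (mkA x l A) (\<alpha> l) \<le> ?e"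
      proof
        fix l assume l: "l \<in> {1..N}"
        have "min (mkA x l A) (\<mu> A) \<le> sugeno n \<mu> (x l)"
          using sugeno_ge[OF A(1), of "x l" \<mu>] minx_mkA[OF A(2)] by simp
        also have "\<dots> \<le> \<alpha> l + ?e" using fe[OF l] by linarith
        finally have m: "min (mkA x l A) (\<mu> A) \<le> \<alpha> l + ?e" .
        show "sigmaG (\<alpha> i) (mkA x l A) (\<alpha> l) \<le> ?e"
        proof (cases "mkA x l A \<le> \<alpha> l + ?e")
          case True then show ?thesis unfolding sigmaG_def using e0 by (simp add: pos_def)
        next
          case False
          then have "\<mu> A \<le> \<alpha> l + ?e" using m by linarith
          then have "pos (\<alpha> i - \<alpha> l) / 2 \<le> ?e" using A(5) e0 by (simp add: pos_def)
          then show ?thesis unfolding sigmaG_def by simp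
        qed
      qed
    qed
    then show ?thesis using delta_i_le[OF AA, of i] by linarith
  qed
qed

lemma upper_one:
  assumes k: "k \<in> {1..N}"
  shows "min (mkA x k Z) (eta_q n N q x \<alpha> Z) \<le> \<alpha> k + Delta_q n N q x \<alpha>"
  using eta_le[OF k, of Z] by (auto simp: impG_def split: if_splits)

lemma ms_fit:
  assumes "\<exists>A. A \<subseteq> {1..n} \<and> card A = q \<and> eta_q n N q x \<alpha> A = 1"
  shows "fit_error n N x \<alpha> (mu_star n N q x \<alpha>) = Delta_q n N q x \<alpha>"
proof (rule antisym)
  let ?D = "Delta_q n N q x \<alpha>"
  let ?m = "mu_star n N q x \<alpha>"
  show "fit_error n N x \<alpha> ?m \<le> ?D"
  proof (rule fit_le[OF N1], rule ballI)
    fix k assume k: "k \<in> {1..N}"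
    have up: "sugeno n ?m (x k) \<le> \<alpha> k + ?D"
    proof (rule sugeno_le, intro allI impI)
      fix B assume B: "B \<subseteq> {1..n}"
      show "min (minx (x k) B) (?m B) \<le> \<alpha> k + ?D"
      proof (cases "B = {}")
        case True
        have "0 \<le> \<alpha> k" using ar k by blast
        moreover have "?m {} = 0" by (simp add: mu_star_def)
        ultimately show ?thesis using True Delta_nonneg by (simp add: minx_def)
      next
        case Bne: False
        show ?thesis
        proof (cases "card B \<le> q")
          case True then show ?thesis using upper_one[OF k, of B] ms_small Bne minx_mkA by simp
        next
          case False
          obtain Z where Z: "Z \<noteq> {}" "Z \<subset> B" "card Z \<le> q" "?m B = eta_q n N q x \<alpha> Z"
            using conjunct1[OF ms_big[OF B]] False by auto
          have "minx (x k) B \<le> minx (x k) Z" using minx_anti[OF _ Z(1)] Z(2) B finite_subset by blast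
          then show ?thesis using upper_one[OF k, of Z] Z minx_mkA[OF Z(1)] by simp
        qed
      qed
    qed
    obtain A where A: "A \<in> Aset" "delta_i n N q x \<alpha> k = delta_iA N x \<alpha> k A"
      using delta_i_ex by blast
    have "delta_iA N x \<alpha> k A \<le> ?D" using A Delta_ge[OF k] by simp
    then have d1: "pos (\<alpha> k - mkA x k A) \<le> ?D"
      and d2: "\<forall>l\<in>{1..N}. sigmaG (\<alpha> k) (mkA x l A) (\<alpha> l) \<le> ?D"
      unfolding delta_iA_le_iff by auto
    have Ane: "A \<noteq> {}" "A \<subseteq> {1..n}" "card A \<le> q" using A(1) unfolding Aset_def by auto
    have eA: "\<alpha> k - ?D \<le> eta_q n N q x \<alpha> A"
      unfolding eta_ge_iff
    proof
      fix l assume l: "l \<in> {1..N}"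
      show "\<alpha> k - ?D \<le> impG (mkA x l A) (min (\<alpha> l + ?D) 1)"
      proof (cases "mkA x l A \<le> min (\<alpha> l + ?D) 1")
        case True
        have "\<alpha> k \<le> 1" using ar k by blast
        then show ?thesis using True Delta_nonneg by (simp add: impG_def)
      next
        case False
        have "mkA x l A \<le> 1" using mkA_range[OF l Ane(2) Ane(1)] by simp
        then have "\<alpha> l + ?D < mkA x l A" using False by linarith
        then have "?D < pos (mkA x l A - \<alpha> l)" by (simp add: pos_def)
        moreover have "min (pos (\<alpha> k - \<alpha> l) / 2) (pos (mkA x l A - \<alpha> l)) \<le> ?D"
          using d2 l unfolding sigmaG_def by blast
        ultimately have "pos (\<alpha> k - \<alpha> l) / 2 \<le> ?D" by linarith
        then have "\<alpha> k - ?D \<le> \<alpha> l + ?D" by (simp add: pos_def)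
        moreover have "\<alpha> k \<le> 1" using ar k by blast
        ultimately show ?thesis using False Delta_nonneg by (simp add: impG_def)
      qed
    qed
    have "\<alpha> k - ?D \<le> min (minx (x k) A) (?m A)"
      using d1 eA ms_small[OF Ane(1) Ane(3)] minx_mkA[OF Ane(1)] by (simp add: pos_def)
    also have "\<dots> \<le> sugeno n ?m (x k)" using sugeno_ge[OF Ane(2)] by blast
    finally show "\<bar>sugeno n ?m (x k) - \<alpha> k\<bar> \<le> ?D" using up by linarith
  qed
  obtain i where i: "i \<in> {1..N}" "?D = delta_i n N q x \<alpha> i" using Delta_ex by blast
  show "?D \<le> fit_error n N x \<alpha> ?m"
    using lower[OF ms_cap[OF assms] ms_qmax i(1)] i(2) by simp
qed

lemma greatest:
  assumes adm: "admissible n N q x \<alpha> \<mu>" and X: "X \<subseteq> {1..n}"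
  shows "\<mu> X \<le> mu_star n N q x \<alpha> X"
proof -
  let ?D = "Delta_q n N q x \<alpha>"
  have cap: "is_capacity n \<mu>" and qm: "q_maxitive n q \<mu>" and fe: "fit_error n N x \<alpha> \<mu> = ?D"
    using adm unfolding admissible_def by auto
  have small: "\<mu> Y \<le> eta_q n N q x \<alpha> Y" if Y: "Y \<subseteq> {1..n}" "Y \<noteq> {}" for Y
    unfolding eta_ge_iff
  proof
    fix k assume k: "k \<in> {1..N}"
    have "min (mkA x k Y) (\<mu> Y) \<le> sugeno n \<mu> (x k)"
      using sugeno_ge[OF Y(1), of "x k" \<mu>] minx_mkA[OF Y(2)] by simp
    also have "\<dots> \<le> \<alpha> k + ?D" using fit_ge[OF k, of n \<mu> x \<alpha>] fe by linarith
    finally have m: "min (mkA x k Y) (\<mu> Y) \<le> \<alpha> k + ?D" .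
    have "\<mu> Y \<le> 1" using cap Y unfolding is_capacity_def by auto
    then show "\<mu> Y \<le> impG (mkA x k Y) (min (\<alpha> k + ?D) 1)"
      using m by (auto simp: impG_def)
  qed
  have e: "\<mu> {} = 0" using cap unfolding is_capacity_def by auto
  show ?thesis
  proof (cases "X = {}")
    case True then show ?thesis using e by (simp add: mu_star_def)
  next
    case Xne: False
    show ?thesis
    proof (cases "card X \<le> q")
      case True then show ?thesis using small[OF X Xne] ms_small[OF Xne] by simp
    next
      case False
      have fX: "finite X" using X finite_subset by blast
      let ?S = "{\<mu> Y | Y. Y \<subset> X \<and> card Y \<le> q}"
      have eq: "\<mu> X = Max ?S" using qm X False unfolding q_maxitive_def by auto
      have fin: "finite ?S"
        by (rule finite_subset[of _ "\<mu> ` Pow X"]) (use fX in auto)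
      have ne: "?S \<noteq> {}" using Xne by auto
      have "\<mu> X \<in> ?S" unfolding eq using fin ne by (rule Max_in)
      then obtain Y where Y: "Y \<subset> X" "card Y \<le> q" "\<mu> X = \<mu> Y" by auto
      show ?thesis
      proof (cases "Y = {}")
        case True then show ?thesis using Y e ms_range[OF X] by simp
      next
        case False
        have "\<mu> Y \<le> eta_q n N q x \<alpha> Y" using small[of Y] Y X False by auto
        also have "\<dots> \<le> mu_star n N q x \<alpha> X" using conjunct2[OF ms_big[OF X], rule_format] False Y(1,2) \<open>\<not> card X \<le> q\<close> by simp
        finally show ?thesis using Y by simp
      qed
    qed
  qed
qed

end

theorem corollary2:
  fixes n N q :: nat and x :: "nat \<Rightarrow> nat \<Rightarrow> real" and \<alpha> :: "nat \<Rightarrow> real"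
  assumes "1 \<le> n" and "1 \<le> N"
    and "\<forall>k\<in>{1..N}. \<forall>i\<in>{1..n}. 0 \<le> x k i \<and> x k i \<le> 1"
    and "\<forall>k\<in>{1..N}. 0 \<le> \<alpha> k \<and> \<alpha> k \<le> 1"
    and "1 \<le> q" and "q \<le> n"
    and "\<exists>A. A \<subseteq> {1..n} \<and> card A = q \<and> eta_q n N q x \<alpha> A = 1"
  shows "admissible n N q x \<alpha> (mu_star n N q x \<alpha>) \<and>
         (\<forall>\<mu>. admissible n N q x \<alpha> \<mu> \<longrightarrow>
               (\<forall>X. X \<subseteq> {1..n} \<longrightarrow> \<mu> X \<le> mu_star n N q x \<alpha> X))"
  using ms_cap[OF assms(1-6) assms(7)] ms_qmax[OF assms(1-6)] ms_fit[OF assms(1-6) assms(7)]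
    greatest[OF assms(1-6)]
  unfolding admissible_def by blast

end
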